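(* Let $X$ be a Borel space, $\mu$ a Borel probability measure on $X$, $L_\iota\ge0$, and $\iota:X\times\mathbb{R}^l\to\mathbb{R}$ an $L_\iota$-LG integrand, with induced integral functional $I_\iota:L^2(\mu,\mathbb{R}^l)\to\mathbb{R}$. Then for all $f\in L^2(\mu,\mathbb{R}^l)$, $\nabla I_\iota(f)(x)=\nabla_z\iota(x,f(x))$ for $\mu$-a.e. $x$, and $I_\iota$ is $L_\iota$-LG (on $L^2(\mu,\mathbb{R}^l)$). If moreover $\iota$ is also a $\lambda_\iota$-PL integrand for some $\lambda_\iota>0$, then $I_\iota$ is $\lambda_\iota$-PL (on $L^2(\mu,\mathbb{R}^l)$).
   Context: $L^2(\mu,\mathbb{R}^l)$ is the Hilbert space of $\mu$-equivalence classes of square-integrable $\mathbb{R}^l$-valued functions. An integrand is a function $\iota:X\times\mathbb{R}^l\to\mathbb{R}$ that is finite, measurable in $x$ and differentiable in $z$; its integral functional is $I_\iota(f)=\int\iota(x,f(x))\,d\mu(x)$, assumed to be a well-defined real number for every $f\in L^2(\mu,\mathbb{R}^l)$. A function $g$ on a Hilbert space $H$ is $L$-LG on a set $E$ if it is Fréchet differentiable there and $\|\nabla g(u)-\nabla g(v)\|\le L\|u-v\|$ for $u,v\in E$; if $g$ is bounded below with $g_*=\inf_Hg\in\mathbb{R}$, it is $\lambda$-PL on $E$ ($\lambda>0$) if $\tfrac12\|\nabla g(u)\|^2\ge\lambda(g(u)-g_* )$ for $u\in E$. $\iota$ is an $L$-LG integrand if $\iota(x,\cdot)$ is $L$-LG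 on $\mathbb{R}^l$ for $\mu$-a.e. $x$, and a $\lambda$-PL integrand if $\iota(x,\cdot)$ is $\lambda$-PL on $\mathbb{R}^l$ for $\mu$-a.e. $x$. *)

theory Defs
  imports "HOL-Analysis.Analysis" "HOL-Probability.Probability"
begin

definition grad :: "('v::real_inner \<Rightarrow> real) \<Rightarrow> 'v \<Rightarrow> 'v" where
  "grad g u = (SOME D. GDERIV g u :> D)"

definition LG_on :: "'v::real_inner set \<Rightarrow> real \<Rightarrow> ('v \<Rightarrow> real) \<Rightarrow> bool" where
  "LG_on E L g \<longleftrightarrow> (\<forall>u\<in>E. \<exists>D. GDERIV g u :> D) \<and>
     (\<forall>u\<in>E. \<forall>v\<in>E. norm (grad g u - grad g v) \<le> L * norm (u - v))"

definition PL_on :: "'v::real_inner set \<Rightarrow> real \<Rightarrow> ('v \<Rightarrow> real) \<Rightarrow> bool" where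
  "PL_on E lam g \<longleftrightarrow> lam > 0 \<and> bdd_below (range g) \<and>
     (\<forall>u\<in>E. (1/2) * (norm (grad g u))\<^sup>2 \<ge> lam * (g u - (INF w. g w)))"

(* L^2(mu, R^l), via representatives: Borel measurable square-integrable functions *)
definition L2 :: "'a measure \<Rightarrow> ('a \<Rightarrow> real^'l) set" where
  "L2 M = {f. f \<in> borel_measurable M \<and> integrable M (\<lambda>x. (norm (f x))\<^sup>2)}"

definition L2_inner :: "'a measure \<Rightarrow> ('a \<Rightarrow> real^'l) \<Rightarrow> ('a \<Rightarrow> real^'l) \<Rightarrow> real" where
  "L2_inner M f g = (\<integral>x. inner (f x) (g x) \<partial>M)"

definition L2_norm :: "'a measure \<Rightarrow> ('a \<Rightarrow> real^'l) \<Rightarrow> real" where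
  "L2_norm M f = sqrt (\<integral>x. (norm (f x))\<^sup>2 \<partial>M)"

definition int_functional :: "'a measure \<Rightarrow> ('a \<Rightarrow> real^'l \<Rightarrow> real) \<Rightarrow> ('a \<Rightarrow> real^'l) \<Rightarrow> real" where
  "int_functional M \<iota> f = (\<integral>x. \<iota> x (f x) \<partial>M)"

definition has_L2_gradient ::
  "'a measure \<Rightarrow> (('a \<Rightarrow> real^'l) \<Rightarrow> real) \<Rightarrow> ('a \<Rightarrow> real^'l) \<Rightarrow> ('a \<Rightarrow> real^'l) \<Rightarrow> bool" where
  "has_L2_gradient M F f G \<longleftrightarrow> G \<in> L2 M \<and>
     (\<forall>e>0. \<exists>d>0. \<forall>h\<in>L2 M. L2_norm M h < d \<longrightarrow>
        \<bar>F (\<lambda>x. f x + h x) - F f - L2_inner M G h\<bar> \<le> e * L2_norm M h)"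

definition L2_LG :: "'a measure \<Rightarrow> real \<Rightarrow> (('a \<Rightarrow> real^'l) \<Rightarrow> real) \<Rightarrow> bool" where
  "L2_LG M L F \<longleftrightarrow> (\<forall>f\<in>L2 M. \<exists>G. has_L2_gradient M F f G) \<and>
     (\<forall>f\<in>L2 M. \<forall>g\<in>L2 M. \<forall>Gf Gg. has_L2_gradient M F f Gf \<longrightarrow> has_L2_gradient M F g Gg \<longrightarrow>
        L2_norm M (\<lambda>x. Gf x - Gg x) \<le> L * L2_norm M (\<lambda>x. f x - g x))"

definition L2_PL :: "'a measure \<Rightarrow> real \<Rightarrow> (('a \<Rightarrow> real^'l) \<Rightarrow> real) \<Rightarrow> bool" where
  "L2_PL M lam F \<longleftrightarrow> lam > 0 \<and> bdd_below (F ` L2 M) \<and>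
     (\<forall>f\<in>L2 M. \<forall>G. has_L2_gradient M F f G \<longrightarrow>
        (1/2) * (L2_norm M G)\<^sup>2 \<ge> lam * (F f - (INF g\<in>L2 M. F g)))"

end

theory Submission
  imports Defs
begin
lemma abel_dini:
  fixes s :: "nat \<Rightarrow> real"
  assumes nn: "\<And>k. s k \<ge> 0" and ns: "\<not> summable s"
  shows "\<exists>t. (\<forall>k. t k \<ge> 0) \<and> summable (\<lambda>k. (t k)\<^sup>2 * s k) \<and> \<not> summable (\<lambda>k. t k * s k)"
proof -
  define S where "S n = sum s {..n}" for n
  define t where "t k = (if S k > 0 then 1 / S k else 0)" for k
  have Smono: "S m \<le> S n" if "m \<le> n" for m n
    unfolding S_def using that nn by (intro sum_mono2) auto
  have Ssuc: "S (Suc n) = S n + s (Suc n)" for n unfolding S_def by simp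
  have unb: "\<exists>n. S n > c" for c
  proof (rule ccontr)
    assume "\<not> ?thesis"
    hence "S n \<le> c" for n by (simp add: not_less)
    hence "sum s {..<n} \<le> c" for n
    proof (cases n)
      case 0 thus ?thesis using \<open>S 0 \<le> c\<close> nn[of 0] unfolding S_def by simp
    next
      case (Suc m) thus ?thesis using \<open>S m \<le> c\<close> unfolding S_def by (simp add: lessThan_Suc_atMost)
    qed
    hence "summable s" using nn by (intro summableI_nonneg_bounded) auto
    thus False using ns by simp
  qed
  obtain k0 where k0: "S k0 > 0" using unb by blast
  have Spos: "S n > 0" if "k0 \<le> n" for n using Smono[OF that] k0 by simp
  have tnn: "t k \<ge> 0" for k unfolding t_def by simp
  define A where "A = sum (\<lambda>k. (t k)\<^sup>2 * s k) {..k0}"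
  have P: "sum (\<lambda>k. (t k)\<^sup>2 * s k) {..n} \<le> A + 1 / S k0 - 1 / S n" if "k0 \<le> n" for n
    using that
  proof (induction n rule: dec_induct)
    case base thus ?case unfolding A_def by simp
  next
    case (step n)
    have Sn: "S n > 0" using Spos step.hyps(1) by simp
    have Sn1: "S (Suc n) = S n + s (Suc n)" by (rule Ssuc)
    have teq: "t (Suc n) = 1 / (S n + s (Suc n))" unfolding t_def using Sn1 Sn nn[of "Suc n"] by simp
    have key: "(1 / (a + b))\<^sup>2 * b \<le> 1 / a - 1 / (a + b)" if "a > 0" "b \<ge> 0" for a b :: real
    proof -
      have "(1 / (a + b))\<^sup>2 * b = b / ((a+b) * (a+b))" by (simp add: power2_eq_square)
      also have "\<dots> \<le> b / (a * (a+b))" using that by (intro divide_left_mono mult_right_mono) auto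
      also have "\<dots> = 1 / a - 1 / (a + b)" using that by (simp add: field_simps)
      finally show ?thesis .
    qed
    have "(t (Suc n))\<^sup>2 * s (Suc n) \<le> 1 / S n - 1 / S (Suc n)"
      using key[OF Sn nn[of "Suc n"]] Sn1 teq by simp
    thus ?case using step.IH by simp
  qed
  have "summable (\<lambda>k. (t k)\<^sup>2 * s k)"
  proof (rule summableI_nonneg_bounded)
    show "0 \<le> (t k)\<^sup>2 * s k" for k using nn by simp
    show "sum (\<lambda>k. (t k)\<^sup>2 * s k) {..<n} \<le> A + 1 / S k0" for n
    proof (cases "n \<le> Suc k0")
      case True
      have "sum (\<lambda>k. (t k)\<^sup>2 * s k) {..<n} \<le> A" unfolding A_def
        using True nn by (intro sum_mono2) auto
      thus ?thesis using k0 by (smt (verit) divide_pos_pos)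
    next
      case False
      then obtain m where m: "n = Suc m" "k0 \<le> m" by (cases n) auto
      have "1 / S m > 0" using Spos m by simp
      have "sum (\<lambda>k. (t k)\<^sup>2 * s k) {..m} \<le> A + 1 / S k0" using P[OF m(2)] \<open>1 / S m > 0\<close> by linarith
      thus ?thesis using m by (simp add: lessThan_Suc_atMost)

    qed
  qed
  moreover have "\<not> summable (\<lambda>k. t k * s k)"
  proof
    assume sm: "summable (\<lambda>k. t k * s k)"
    have Q: "\<exists>n\<ge>k0. sum (\<lambda>k. t k * s k) {..n} \<ge> real j / 2" for j
    proof (induction j)
      case 0 show ?case using tnn nn by (intro exI[of _ k0]) (auto intro: sum_nonneg)
    next
      case (Suc j)
      then obtain n where n: "n \<ge> k0" "sum (\<lambda>k. t k * s k) {..n} \<ge> real j / 2" by blast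
      obtain n' where n': "S n' > 2 * S n" using unb by blast
      have nn': "n < n'"
      proof (rule ccontr)
        assume "\<not> n < n'" hence "S n' \<le> S n" using Smono by simp
        thus False using n' Spos[OF n(1)] by simp
      qed
      have split: "{..n'} = {..n} \<union> {Suc n..n'}" using nn' by auto
      have "sum (\<lambda>k. t k * s k) {..n'} = sum (\<lambda>k. t k * s k) {..n} + sum (\<lambda>k. t k * s k) {Suc n..n'}"
        unfolding split by (rule sum.union_disjoint) auto
      moreover have "sum (\<lambda>k. t k * s k) {Suc n..n'} \<ge> sum (\<lambda>k. s k / S n') {Suc n..n'}"
      proof (rule sum_mono)
        fix k assume k: "k \<in> {Suc n..n'}"
        hence "S k > 0" "S k \<le> S n'" using Spos n(1) Smono by auto
        thus "s k / S n' \<le> t k * s k" unfolding t_def using nn[of k]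
          by (simp add: divide_simps mult_left_mono)
      qed
      moreover have "sum (\<lambda>k. s k / S n') {Suc n..n'} = (S n' - S n) / S n'"
      proof -
        have "S n' = S n + sum s {Suc n..n'}" unfolding S_def split
          by (rule sum.union_disjoint) auto
        thus ?thesis by (simp add: sum_divide_distrib)
      qed
      moreover have "(S n' - S n) / S n' \<ge> 1/2" using n' Spos[OF n(1)] by (simp add: field_simps)
      ultimately have "sum (\<lambda>k. t k * s k) {..n'} \<ge> real j / 2 + 1/2" using n(2) by linarith
      moreover have "real (Suc j) / 2 = real j / 2 + 1/2" by (simp add: add_divide_distrib)
      ultimately show ?case using n(1) nn' by (intro exI[of _ n']) auto
    qed
    obtain j where j: "real j / 2 > suminf (\<lambda>k. t k * s k)"
      using reals_Archimedean2[of "2 * suminf (\<lambda>k. t k * s k)"] by (auto simp: field_simps)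
    obtain n where "sum (\<lambda>k. t k * s k) {..n} \<ge> real j / 2" using Q by blast
    moreover have "sum (\<lambda>k. t k * s k) {..<Suc n} \<le> suminf (\<lambda>k. t k * s k)"
      using sm tnn nn by (intro sum_le_suminf) auto
    ultimately show False using j by (simp add: lessThan_Suc_atMost)
  qed
  ultimately show ?thesis using tnn by blast
qed

lemma band_sum:
  fixes \<phi> :: "'a \<Rightarrow> real" and c :: "nat \<Rightarrow> real"
  assumes pm: "\<phi> \<in> borel_measurable M" and nn: "\<And>x. \<phi> x \<ge> 0" and cn: "\<And>k. c k \<ge> 0"
  shows "(\<integral>\<^sup>+ x. ennreal (c (nat \<lfloor>\<phi> x\<rfloor>) * \<phi> x) \<partial>M)
       = (\<Sum>k. ennreal (c k) * (\<integral>\<^sup>+ x. ennreal (\<phi> x) * indicator {x. nat \<lfloor>\<phi> x\<rfloor> = k} x \<partial>M))"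
proof -
  have pt: "ennreal (c (nat \<lfloor>\<phi> x\<rfloor>) * \<phi> x) =
      (\<Sum>k. ennreal (c k) * (ennreal (\<phi> x) * indicator {x. nat \<lfloor>\<phi> x\<rfloor> = k} x))" for x
  proof -
    have "(\<Sum>k. ennreal (c k) * (ennreal (\<phi> x) * indicator {x. nat \<lfloor>\<phi> x\<rfloor> = k} x))
        = (\<Sum>k\<in>{nat \<lfloor>\<phi> x\<rfloor>}. ennreal (c k) * (ennreal (\<phi> x) * indicator {x. nat \<lfloor>\<phi> x\<rfloor> = k} x))"
      by (rule suminf_finite) auto
    also have "\<dots> = ennreal (c (nat \<lfloor>\<phi> x\<rfloor>) * \<phi> x)"
      using cn nn by (simp add: ennreal_mult)
    finally show ?thesis by simp
  qed
  have meas: "(\<lambda>x. nat \<lfloor>\<phi> x\<rfloor>) \<in> measurable M (count_space UNIV)"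
    using pm by measurable
  have mk: "(\<lambda>x. ennreal (\<phi> x) * indicator {x. nat \<lfloor>\<phi> x\<rfloor> = k} x) \<in> borel_measurable M" for k
  proof -
    have "{x \<in> space M. nat \<lfloor>\<phi> x\<rfloor> = k} \<in> sets M"
      using measurable_sets[OF meas, of "{k}"] by (simp add: vimage_def Int_def conj_commute)
    hence "(\<lambda>x. indicator {x. nat \<lfloor>\<phi> x\<rfloor> = k} x :: ennreal) \<in> borel_measurable M"
      by (subst borel_measurable_indicator_iff) (simp add: Int_def conj_commute)
    thus ?thesis using pm by measurable
  qed
  have "(\<integral>\<^sup>+ x. ennreal (c (nat \<lfloor>\<phi> x\<rfloor>) * \<phi> x) \<partial>M)
     = (\<Sum>k. \<integral>\<^sup>+ x. ennreal (c k) * (ennreal (\<phi> x) * indicator {x. nat \<lfloor>\<phi> x\<rfloor> = k} x) \<partial>M)"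
    unfolding pt by (rule nn_integral_suminf) (intro borel_measurable_times_ennreal borel_measurable_const mk)
  also have "\<dots> = (\<Sum>k. ennreal (c k) * (\<integral>\<^sup>+ x. ennreal (\<phi> x) * indicator {x. nat \<lfloor>\<phi> x\<rfloor> = k} x \<partial>M))"
    by (rule suminf_cong) (rule nn_integral_cmult[OF mk])
  finally show ?thesis .
qed

lemma kothe:
  fixes \<phi> :: "'a \<Rightarrow> real"
  assumes fin: "finite_measure M" and pm: "\<phi> \<in> borel_measurable M" and nn: "\<And>x. \<phi> x \<ge> 0"
    and H: "\<And>h. h \<in> borel_measurable M \<Longrightarrow> (\<And>x. h x \<ge> 0) \<Longrightarrow>
             integrable M (\<lambda>x. (h x)\<^sup>2 * \<phi> x) \<Longrightarrow> integrable M (\<lambda>x. h x * \<phi> x)"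
  shows "integrable M \<phi>"
proof (rule ccontr)
  assume ni: "\<not> integrable M \<phi>"
  define e where "e k = (\<integral>\<^sup>+ x. ennreal (\<phi> x) * indicator {x. nat \<lfloor>\<phi> x\<rfloor> = k} x \<partial>M)" for k
  have efin: "e k < \<infinity>" for k
  proof -
    have "e k \<le> (\<integral>\<^sup>+ x. ennreal (real (Suc k)) \<partial>M)"
      unfolding e_def
    proof (rule nn_integral_mono)
      fix x
      show "ennreal (\<phi> x) * indicator {x. nat \<lfloor>\<phi> x\<rfloor> = k} x \<le> ennreal (real (Suc k))"
      proof (cases "nat \<lfloor>\<phi> x\<rfloor> = k")
        case True
        have "\<phi> x < real (Suc k)" using True nn[of x] by linarith
        hence le: "ennreal (\<phi> x) \<le> ennreal (real (Suc k))" by (rule ennreal_leI[OF less_imp_le])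
        have "indicator {x. nat \<lfloor>\<phi> x\<rfloor> = k} x = (1::ennreal)" using True by (simp add: indicator_def)
        thus ?thesis using le by (simp only: mult_1_right)
      next
        case False
        hence "indicator {x. nat \<lfloor>\<phi> x\<rfloor> = k} x = (0::ennreal)" by (simp add: indicator_def)
        thus ?thesis by (simp only: mult_zero_right zero_le)
      qed
    qed
    also have "\<dots> < \<infinity>"
    proof -
      have "emeasure M (space M) < \<infinity>" using finite_measure.emeasure_finite[OF fin, of "space M"]
        by (simp add: less_top)
      thus ?thesis unfolding nn_integral_const by (simp add: ennreal_mult_less_top)
    qed
    finally show ?thesis .
  qed
  define s where "s k = enn2real (e k)" for k
  have es: "e k = ennreal (s k)" for k unfolding s_def using efin[of k] by simp
  have snn: "s k \<ge> 0" for k unfolding s_def by simp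
  have tot: "(\<integral>\<^sup>+ x. ennreal (\<phi> x) \<partial>M) = (\<Sum>k. ennreal (s k))"
    using band_sum[OF pm nn, of "\<lambda>_. 1"] unfolding e_def[symmetric] es by simp
  have "\<not> (\<integral>\<^sup>+ x. ennreal (\<phi> x) \<partial>M) < \<infinity>" using ni pm nn unfolding integrable_iff_bounded by simp
  hence "(\<integral>\<^sup>+ x. ennreal (\<phi> x) \<partial>M) = \<infinity>" by (simp add: not_less top_unique)

  hence "\<not> summable s" using tot ennreal_suminf_neq_top[of s] snn by auto
  then obtain t where tn: "\<And>k. t k \<ge> 0" and s2: "summable (\<lambda>k. (t k)\<^sup>2 * s k)"
      and s1: "\<not> summable (\<lambda>k. t k * s k)"
    using abel_dini[of s] snn by blast
  define h where "h x = t (nat \<lfloor>\<phi> x\<rfloor>)" for x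
  have hm: "h \<in> borel_measurable M" unfolding h_def using pm by measurable
  have i2: "integrable M (\<lambda>x. (h x)\<^sup>2 * \<phi> x)"
  proof -
    have "(\<integral>\<^sup>+ x. ennreal ((h x)\<^sup>2 * \<phi> x) \<partial>M) = (\<Sum>k. ennreal ((t k)\<^sup>2 * s k))"
    proof -
      have "(\<integral>\<^sup>+ x. ennreal ((h x)\<^sup>2 * \<phi> x) \<partial>M) = (\<Sum>k. ennreal ((t k)\<^sup>2) * ennreal (s k))"
        unfolding h_def using band_sum[OF pm nn, of "\<lambda>k. (t k)\<^sup>2", OF zero_le_power2] unfolding e_def[symmetric] es by simp
      also have "\<dots> = (\<Sum>k. ennreal ((t k)\<^sup>2 * s k))"
        by (rule suminf_cong) (rule ennreal_mult''[symmetric, OF snn])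
      finally show ?thesis .
    qed
    also have "\<dots> < \<infinity>"
    proof -
      have "0 \<le> (t k)\<^sup>2 * s k" for k using snn by simp
      hence "(\<Sum>k. ennreal ((t k)\<^sup>2 * s k)) \<noteq> top" by (rule ennreal_suminf_neq_top[OF s2])
      thus ?thesis by (simp add: less_top)
    qed
    finally show ?thesis using hm pm nn unfolding integrable_iff_bounded by simp
  qed
  have "integrable M (\<lambda>x. h x * \<phi> x)" using H[OF hm _ i2] tn unfolding h_def by simp
  moreover have "(\<integral>\<^sup>+ x. ennreal (h x * \<phi> x) \<partial>M) = (\<Sum>k. ennreal (t k * s k))"
  proof -
    have "(\<integral>\<^sup>+ x. ennreal (h x * \<phi> x) \<partial>M) = (\<Sum>k. ennreal (t k) * ennreal (s k))"
      unfolding h_def using band_sum[OF pm nn, of t, OF tn] unfolding e_def[symmetric] es by simp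
    also have "\<dots> = (\<Sum>k. ennreal (t k * s k))"
      by (rule suminf_cong) (rule ennreal_mult''[symmetric, OF snn])
    finally show ?thesis .
  qed
  moreover have "(\<Sum>k. ennreal (t k * s k)) = top"
  proof -
    have "0 \<le> t k * s k" for k using snn tn by simp
    thus ?thesis by (rule summable_iff_suminf_neq_top[OF _ s1])
  qed
  ultimately show False unfolding integrable_iff_bounded using tn nn unfolding h_def by simp
qed

lemma grad_ok:
  fixes f :: "'v::euclidean_space \<Rightarrow> real"
  assumes "f differentiable (at z)"
  shows "GDERIV f z :> grad f z"
proof -
  obtain f' where fd: "(f has_derivative f') (at z)" using assms unfolding differentiable_def by blast
  have lin: "linear f'" using has_derivative_linear[OF fd] .
  define D where "D = (\<Sum>b\<in>Basis. f' b *\<^sub>R b)"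
  have "f' h = inner h D" for h
  proof -
    have "f' h = f' (\<Sum>b\<in>Basis. (h \<bullet> b) *\<^sub>R b)" by (simp add: euclidean_representation)
    also have "\<dots> = (\<Sum>b\<in>Basis. (h \<bullet> b) * f' b)"
      using lin by (simp add: linear_sum linear_scale)
    also have "\<dots> = inner h D" unfolding D_def by (simp add: inner_sum_right mult.commute)
    finally show ?thesis .
  qed
  hence "f' = (\<lambda>h. inner h D)" by auto
  hence "GDERIV f z :> D" using fd unfolding gderiv_def by simp
  thus ?thesis unfolding grad_def by (rule someI)
qed

lemma lg_bound:
  fixes g :: "'v::euclidean_space \<Rightarrow> real"
  assumes LG: "LG_on UNIV L g"
  shows "\<bar>g (z + h) - g z - inner (grad g z) h\<bar> \<le> L * (norm h)\<^sup>2"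
proof -
  have gd: "GDERIV g u :> grad g u" for u
  proof -
    obtain D where "GDERIV g u :> D" using LG unfolding LG_on_def by blast
    thus ?thesis unfolding grad_def by (rule someI)
  qed
  have lip: "norm (grad g u - grad g v) \<le> L * norm (u - v)" for u v
    using LG unfolding LG_on_def by blast
  define \<phi> where "\<phi> t = g (z + t *\<^sub>R h)" for t :: real
  have der: "DERIV \<phi> t :> inner (grad g (z + t *\<^sub>R h)) h" for t
  proof -
    have d1: "((\<lambda>t. z + t *\<^sub>R h) has_derivative (\<lambda>s. s *\<^sub>R h)) (at t)"
      by (auto intro!: derivative_eq_intros)
    have d2: "(g has_derivative (\<lambda>k. inner k (grad g (z + t *\<^sub>R h)))) (at (z + t *\<^sub>R h))"
      using gd unfolding gderiv_def by blast
    have "(\<phi> has_derivative (\<lambda>s. inner (s *\<^sub>R h) (grad g (z + t *\<^sub>R h)))) (at t)"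
      unfolding \<phi>_def using has_derivative_compose[OF d1 d2] by (simp add: o_def)
    moreover have "(\<lambda>s. inner (s *\<^sub>R h) (grad g (z + t *\<^sub>R h))) = (*) (inner (grad g (z + t *\<^sub>R h)) h)"
      by (auto simp: inner_commute)
    ultimately show ?thesis unfolding has_field_derivative_def by simp
  qed
  obtain \<xi> where xi: "0 < \<xi>" "\<xi> < 1" "\<phi> 1 - \<phi> 0 = (1 - 0) * inner (grad g (z + \<xi> *\<^sub>R h)) h"
    using MVT2[of 0 1 \<phi> "\<lambda>t. inner (grad g (z + t *\<^sub>R h)) h"] der by auto
  have "g (z + h) - g z - inner (grad g z) h = inner (grad g (z + \<xi> *\<^sub>R h) - grad g z) h"
    using xi(3) unfolding \<phi>_def by (simp add: inner_diff_left)
  hence "\<bar>g (z + h) - g z - inner (grad g z) h\<bar> \<le> norm (grad g (z + \<xi> *\<^sub>R h) - grad g z) * norm h"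
    using Cauchy_Schwarz_ineq2 by metis
  also have "\<dots> \<le> (L * norm (\<xi> *\<^sub>R h)) * norm h"
    using lip[of "z + \<xi> *\<^sub>R h" z] by (intro mult_right_mono) auto
  also have "\<dots> \<le> L * (norm h)\<^sup>2"
  proof -
    have L0: "L \<ge> 0" if "h \<noteq> 0"
    proof -
      have "0 \<le> L * norm h" using lip[of h 0] norm_ge_zero[of "grad g h - grad g 0"] by (metis diff_zero order.trans)
      thus ?thesis using that by (simp add: zero_le_mult_iff)
    qed
    have "norm (\<xi> *\<^sub>R h) \<le> norm h" using xi mult_left_le_one_le[of "norm h" \<xi>] by simp
    thus ?thesis using L0 by (cases "h = 0") (auto simp: power2_eq_square mult_left_mono mult_right_mono mult.assoc)
  qed
  finally show ?thesis .
qed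

lemma sq_sum_le: "(a + b)\<^sup>2 \<le> 2 * a\<^sup>2 + 2 * (b::real)\<^sup>2"
proof -
  have "0 \<le> (a - b)\<^sup>2" by simp
  thus ?thesis unfolding power2_sum power2_diff by linarith
qed

lemma prod_le_sq: "a * b \<le> a\<^sup>2 + (b::real)\<^sup>2"
proof -
  have "0 \<le> (a - b)\<^sup>2" "0 \<le> a\<^sup>2" "0 \<le> b\<^sup>2" by simp_all
  thus ?thesis unfolding power2_diff by linarith
qed

lemma L2_meas: "f \<in> L2 M \<Longrightarrow> f \<in> borel_measurable M" unfolding L2_def by simp
lemma L2_int: "f \<in> L2 M \<Longrightarrow> integrable M (\<lambda>x. (norm (f x))\<^sup>2)" unfolding L2_def by simp

lemma L2_add:
  assumes "f \<in> L2 M" "g \<in> L2 M" shows "(\<lambda>x. f x + g x) \<in> L2 M"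
proof -
  note [measurable] = L2_meas[OF assms(1)] L2_meas[OF assms(2)]
  have m: "(\<lambda>x. f x + g x) \<in> borel_measurable M" by measurable
  have i1: "integrable M (\<lambda>x. 2 * (norm (f x))\<^sup>2 + 2 * (norm (g x))\<^sup>2)" using assms unfolding L2_def by simp
  have b1: "norm ((norm (f x + g x))\<^sup>2) \<le> norm (2 * (norm (f x))\<^sup>2 + 2 * (norm (g x))\<^sup>2)" for x
  proof -
    have "norm (f x + g x) \<le> norm (f x) + norm (g x)" by (rule norm_triangle_ineq)
    hence "(norm (f x + g x))\<^sup>2 \<le> (norm (f x) + norm (g x))\<^sup>2" by (simp add: power_mono)
    also have "\<dots> \<le> 2 * (norm (f x))\<^sup>2 + 2 * (norm (g x))\<^sup>2" by (rule sq_sum_le)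
    finally show ?thesis by simp
  qed
  have m2: "(\<lambda>x. (norm (f x + g x))\<^sup>2) \<in> borel_measurable M" by measurable
  have "integrable M (\<lambda>x. (norm (f x + g x))\<^sup>2)"
    by (rule Bochner_Integration.integrable_bound[OF i1 m2 AE_I2[OF b1]])
  thus ?thesis using m unfolding L2_def by simp
qed

lemma L2_scale:
  assumes "f \<in> L2 M" shows "(\<lambda>x. c *\<^sub>R f x) \<in> L2 M"
proof -
  have "integrable M (\<lambda>x. c\<^sup>2 * (norm (f x))\<^sup>2)" using assms unfolding L2_def by simp
  moreover have "(norm (c *\<^sub>R f x))\<^sup>2 = c\<^sup>2 * (norm (f x))\<^sup>2" for x by (simp add: power_mult_distrib)
  moreover note [measurable] = L2_meas[OF assms(1)]
  moreover have "(\<lambda>x. c *\<^sub>R f x) \<in> borel_measurable M" by measurable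
  ultimately show ?thesis unfolding L2_def by simp
qed

lemma L2_diff:
  assumes "f \<in> L2 M" "g \<in> L2 M" shows "(\<lambda>x. f x - g x) \<in> L2 M"
  using L2_add[OF assms(1) L2_scale[OF assms(2), of "-1"]] by simp

lemma L2_const:
  assumes "prob_space M" shows "(\<lambda>x. c) \<in> L2 M"
  unfolding L2_def using prob_space.finite_measure[OF assms]
  by (simp add: finite_measure.integrable_const)

lemma L2_inner_int:
  assumes "f \<in> L2 M" "g \<in> L2 M" shows "integrable M (\<lambda>x. inner (f x) (g x))"
proof -
  note [measurable] = L2_meas[OF assms(1)] L2_meas[OF assms(2)]
  have m: "(\<lambda>x. inner (f x) (g x)) \<in> borel_measurable M" by measurable
  have i1: "integrable M (\<lambda>x. (norm (f x))\<^sup>2 + (norm (g x))\<^sup>2)" using assms unfolding L2_def by simp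
  have b1: "norm (inner (f x) (g x)) \<le> norm ((norm (f x))\<^sup>2 + (norm (g x))\<^sup>2)" for x
  proof -
    have "\<bar>inner (f x) (g x)\<bar> \<le> norm (f x) * norm (g x)" by (rule Cauchy_Schwarz_ineq2)
    also have "\<dots> \<le> (norm (f x))\<^sup>2 + (norm (g x))\<^sup>2"
      by (rule prod_le_sq)
    finally show ?thesis by simp
  qed
  show ?thesis by (rule Bochner_Integration.integrable_bound[OF i1 m AE_I2[OF b1]])
qed

lemma L2_norm_sq: "(L2_norm M f)\<^sup>2 = (\<integral>x. (norm (f x))\<^sup>2 \<partial>M)"
  unfolding L2_norm_def by (simp add: integral_nonneg_AE)

lemma L2_norm_nonneg: "L2_norm M f \<ge> 0" unfolding L2_norm_def by simp

lemma deriv_seq: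
  fixes \<phi> :: "real \<Rightarrow> real"
  assumes "DERIV \<phi> 0 :> c"
  shows "(\<lambda>n. (\<phi> (1 / real (Suc n)) - \<phi> 0) * real (Suc n)) \<longlonglongrightarrow> c"
proof -
  have lim: "(\<lambda>h. (\<phi> (0 + h) - \<phi> 0) / h) \<midarrow>0\<rightarrow> c" using assms unfolding DERIV_def .
  have s: "(\<lambda>n. 1 / real (Suc n)) \<longlonglongrightarrow> 0"
    using LIMSEQ_inverse_real_of_nat by (simp add: inverse_eq_divide)
  have A: "\<forall>S. (\<forall>n. S n \<noteq> 0) \<and> S \<longlonglongrightarrow> 0 \<longrightarrow> (\<lambda>n. (\<phi> (0 + S n) - \<phi> 0) / S n) \<longlonglongrightarrow> c"
    by (rule iffD2[OF LIMSEQ_SEQ_conv lim])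
  have "(\<lambda>n. (\<phi> (0 + 1 / real (Suc n)) - \<phi> 0) / (1 / real (Suc n))) \<longlonglongrightarrow> c"
  proof -
    have "(\<forall>n. 1 / real (Suc n) \<noteq> 0) \<and> (\<lambda>n. 1 / real (Suc n)) \<longlonglongrightarrow> 0" using s by simp
    thus ?thesis using mp[OF spec[OF A, of "\<lambda>n. 1 / real (Suc n)"]] by simp
  qed
  thus ?thesis by simp
qed

lemma deriv_line:
  fixes g :: "'v::euclidean_space \<Rightarrow> real"
  assumes "GDERIV g z :> D"
  shows "DERIV (\<lambda>t. g (z + t *\<^sub>R b)) 0 :> inner D b"
proof -
  have d1: "((\<lambda>t. z + t *\<^sub>R b) has_derivative (\<lambda>s. s *\<^sub>R b)) (at 0)"
    by (auto intro!: derivative_eq_intros)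
  have d2: "(g has_derivative (\<lambda>k. inner k D)) (at (z + 0 *\<^sub>R b))"
    using assms unfolding gderiv_def by simp
  have "((\<lambda>t. g (z + t *\<^sub>R b)) has_derivative (\<lambda>s. inner (s *\<^sub>R b) D)) (at 0)"
    using has_derivative_compose[OF d1 d2] by (simp add: o_def)
  moreover have "(\<lambda>s. inner (s *\<^sub>R b) D) = (*) (inner D b)"
    by (auto simp: inner_commute)
  ultimately show ?thesis unfolding has_field_derivative_def by simp
qed

locale lgs =
  fixes M :: "'a measure" and \<iota> :: "'a \<Rightarrow> real^'l \<Rightarrow> real" and L :: real
  assumes prob: "prob_space M"
    and L_nonneg: "L \<ge> 0"
    and diff: "\<And>x z. (\<iota> x) differentiable (at z)"
    and wd: "\<And>f. f \<in> L2 M \<Longrightarrow> integrable M (\<lambda>x. \<iota> x (f x))"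
    and LG: "AE x in M. LG_on UNIV L (\<iota> x)"
begin

lemma gd: "GDERIV (\<iota> x) z :> grad (\<iota> x) z" by (rule grad_ok[OF diff])

lemma Nbound: "AE x in M. \<forall>z h. \<bar>\<iota> x (z + h) - \<iota> x z - inner (grad (\<iota> x) z) h\<bar> \<le> L * (norm h)\<^sup>2"
  using LG by eventually_elim (intro allI lg_bound)

lemma Nlip: "AE x in M. \<forall>u v. norm (grad (\<iota> x) u - grad (\<iota> x) v) \<le> L * norm (u - v)"
  using LG by eventually_elim (simp add: LG_on_def)

lemma wd_meas: "f \<in> L2 M \<Longrightarrow> (\<lambda>x. \<iota> x (f x)) \<in> borel_measurable M"
  using wd by (rule borel_measurable_integrable)

lemma grad_meas:
  assumes f: "f \<in> L2 M"
  shows "(\<lambda>x. grad (\<iota> x) (f x)) \<in> borel_measurable M"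
proof -
  have comp: "(\<lambda>x. inner (grad (\<iota> x) (f x)) b) \<in> borel_measurable M" for b
  proof (rule borel_measurable_LIMSEQ_real)
    fix x
    show "(\<lambda>n. (\<iota> x (f x + (1 / real (Suc n)) *\<^sub>R b) - \<iota> x (f x + 0 *\<^sub>R b)) * real (Suc n))
        \<longlonglongrightarrow> inner (grad (\<iota> x) (f x)) b"
      by (rule deriv_seq[where \<phi> = "\<lambda>t. \<iota> x (f x + t *\<^sub>R b)"]) (rule deriv_line[OF gd])
  next
    fix n
    have "(\<lambda>x. f x + c) \<in> L2 M" for c using L2_add[OF f L2_const[OF prob]] .
    hence m: "(\<lambda>x. \<iota> x (f x + c)) \<in> borel_measurable M" for c using wd_meas by blast
    note [measurable] = m[of "(1 / real (Suc n)) *\<^sub>R b"] m[of "0 *\<^sub>R b"]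
    show "(\<lambda>x. (\<iota> x (f x + (1 / real (Suc n)) *\<^sub>R b) - \<iota> x (f x + 0 *\<^sub>R b)) * real (Suc n))
        \<in> borel_measurable M" by measurable
  qed
  have "(\<lambda>x. \<Sum>b\<in>Basis. inner (grad (\<iota> x) (f x)) b *\<^sub>R b) \<in> borel_measurable M"
    using comp by (intro borel_measurable_sum borel_measurable_scaleR borel_measurable_const) simp_all
  thus ?thesis by (simp add: euclidean_representation)
qed

end

context lgs begin

lemma fin: "finite_measure M" using prob by (rule prob_space.finite_measure)

lemma zero_L2: "(\<lambda>x. 0) \<in> L2 M" by (rule L2_const[OF prob])

lemma grad0_L2: "(\<lambda>x. grad (\<iota> x) 0) \<in> L2 M"
proof -
  define a where "a x = grad (\<iota> x) 0" for x
  have am[measurable]: "a \<in> borel_measurable M" unfolding a_def using grad_meas[OF zero_L2] by simp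
  define \<phi> where "\<phi> x = (norm (a x))\<^sup>2" for x
  have "integrable M \<phi>"
  proof (rule kothe[OF fin])
    show "\<phi> \<in> borel_measurable M" unfolding \<phi>_def by measurable
    show "0 \<le> \<phi> x" for x unfolding \<phi>_def by simp
  next
    fix h :: "'a \<Rightarrow> real"
    assume hm[measurable]: "h \<in> borel_measurable M" and hnn: "\<And>x. 0 \<le> h x"
      and i2: "integrable M (\<lambda>x. (h x)\<^sup>2 * \<phi> x)"
    define f where "f x = h x *\<^sub>R a x" for x
    have fm[measurable]: "f \<in> borel_measurable M" unfolding f_def by measurable
    have fsq: "(norm (f x))\<^sup>2 = (h x)\<^sup>2 * \<phi> x" for x
      unfolding f_def \<phi>_def by (simp add: power_mult_distrib)
    have fL2: "f \<in> L2 M" unfolding L2_def using fm i2 fsq by simp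
    have i1: "integrable M (\<lambda>x. \<iota> x (f x))" using wd[OF fL2] .
    have i0: "integrable M (\<lambda>x. \<iota> x 0)" using wd[OF zero_L2] by simp
    note [measurable] = borel_measurable_integrable[OF i1] borel_measurable_integrable[OF i0]
    define d where "d x = \<iota> x (f x) - \<iota> x 0 - inner (a x) (f x)" for x
    have dm: "d \<in> borel_measurable M" unfolding d_def by measurable
    have ib: "integrable M (\<lambda>x. L * (norm (f x))\<^sup>2)" using L2_int[OF fL2] by simp
    have "AE x in M. norm (d x) \<le> norm (L * (norm (f x))\<^sup>2)"
      using Nbound
    proof eventually_elim
      case (elim x)
      hence "\<bar>\<iota> x (0 + f x) - \<iota> x 0 - inner (grad (\<iota> x) 0) (f x)\<bar> \<le> L * (norm (f x))\<^sup>2" by blast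
      thus ?case unfolding d_def a_def using L_nonneg by simp
    qed
    hence id: "integrable M d" by (rule Bochner_Integration.integrable_bound[OF ib dm])
    have "integrable M (\<lambda>x. \<iota> x (f x) - \<iota> x 0 - d x)" using i1 i0 id by simp
    moreover have "\<iota> x (f x) - \<iota> x 0 - d x = h x * \<phi> x" for x
      unfolding d_def f_def \<phi>_def by (simp add: power2_norm_eq_inner)
    ultimately show "integrable M (\<lambda>x. h x * \<phi> x)" by simp
  qed
  thus ?thesis unfolding L2_def \<phi>_def a_def using am unfolding a_def by simp
qed

lemma G_L2:
  assumes f: "f \<in> L2 M"
  shows "(\<lambda>x. grad (\<iota> x) (f x)) \<in> L2 M"
proof -
  define a where "a x = grad (\<iota> x) 0" for x
  have Gm: "(\<lambda>x. grad (\<iota> x) (f x)) \<in> borel_measurable M" by (rule grad_meas[OF f])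
  have m2: "(\<lambda>x. (norm (grad (\<iota> x) (f x)))\<^sup>2) \<in> borel_measurable M" using Gm by measurable
  have ib: "integrable M (\<lambda>x. 2 * (norm (a x))\<^sup>2 + 2 * L\<^sup>2 * (norm (f x))\<^sup>2)"
    using L2_int[OF grad0_L2] L2_int[OF f] unfolding a_def by simp
  have "AE x in M. norm ((norm (grad (\<iota> x) (f x)))\<^sup>2) \<le> norm (2 * (norm (a x))\<^sup>2 + 2 * L\<^sup>2 * (norm (f x))\<^sup>2)"
    using Nlip
  proof eventually_elim
    case (elim x)
    hence "norm (grad (\<iota> x) (f x) - a x) \<le> L * norm (f x)" unfolding a_def by (metis diff_zero)
    hence "norm (grad (\<iota> x) (f x)) \<le> norm (a x) + L * norm (f x)" by (metis norm_triangle_sub order_trans add_le_cancel_left add.commute)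
    hence "(norm (grad (\<iota> x) (f x)))\<^sup>2 \<le> (norm (a x) + L * norm (f x))\<^sup>2" by (simp add: power_mono)
    also have "\<dots> \<le> 2 * (norm (a x))\<^sup>2 + 2 * (L * norm (f x))\<^sup>2" by (rule sq_sum_le)
    finally show ?case by (simp add: power_mult_distrib)
  qed
  hence "integrable M (\<lambda>x. (norm (grad (\<iota> x) (f x)))\<^sup>2)"
    by (rule Bochner_Integration.integrable_bound[OF ib m2])
  thus ?thesis unfolding L2_def using Gm by simp
qed

end

lemma L2_norm_scale: "L2_norm M (\<lambda>x. c *\<^sub>R f x) = \<bar>c\<bar> * L2_norm M f"
proof -
  have "(\<integral>x. (norm (c *\<^sub>R f x))\<^sup>2 \<partial>M) = c\<^sup>2 * (\<integral>x. (norm (f x))\<^sup>2 \<partial>M)"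
    by (simp add: power_mult_distrib)
  thus ?thesis unfolding L2_norm_def by (simp add: real_sqrt_mult)
qed

lemma grad_unique:
  assumes p: "prob_space M"
    and g1: "has_L2_gradient M F f G1" and g2: "has_L2_gradient M F f G2"
  shows "AE x in M. G1 x = G2 x"
proof -
  have G1: "G1 \<in> L2 M" and G2: "G2 \<in> L2 M" using g1 g2 unfolding has_L2_gradient_def by auto
  define \<Delta> where "\<Delta> x = G1 x - G2 x" for x
  have DL2: "\<Delta> \<in> L2 M" unfolding \<Delta>_def by (rule L2_diff[OF G1 G2])
  define n where "n = L2_norm M \<Delta>"
  have n0: "n \<ge> 0" unfolding n_def by (rule L2_norm_nonneg)
  have small: "n \<le> 2 * e" if e: "e > 0" for e
  proof (rule ccontr)
    assume "\<not> n \<le> 2 * e"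
    hence npos: "n > 0" and ne: "n > 2 * e" using e by auto
    obtain d1 where d1: "d1 > 0" "\<forall>h\<in>L2 M. L2_norm M h < d1 \<longrightarrow>
        \<bar>F (\<lambda>x. f x + h x) - F f - L2_inner M G1 h\<bar> \<le> e * L2_norm M h"
      using g1 e unfolding has_L2_gradient_def by blast
    obtain d2 where d2: "d2 > 0" "\<forall>h\<in>L2 M. L2_norm M h < d2 \<longrightarrow>
        \<bar>F (\<lambda>x. f x + h x) - F f - L2_inner M G2 h\<bar> \<le> e * L2_norm M h"
      using g2 e unfolding has_L2_gradient_def by blast
    define t where "t = min d1 d2 / (2 * n)"
    have tpos: "t > 0" unfolding t_def using d1 d2 npos by simp
    define h where "h x = t *\<^sub>R \<Delta> x" for x
    have hL2: "h \<in> L2 M" unfolding h_def by (rule L2_scale[OF DL2])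
    have hn: "L2_norm M h = t * n" unfolding h_def n_def L2_norm_scale using tpos by simp
    have "t * n = min d1 d2 / 2" unfolding t_def using npos by simp
    hence hsmall: "L2_norm M h < d1" "L2_norm M h < d2" using hn d1 d2 by auto
    have b1: "\<bar>F (\<lambda>x. f x + h x) - F f - L2_inner M G1 h\<bar> \<le> e * (t * n)"
      using d1(2) hL2 hsmall hn by auto
    have b2: "\<bar>F (\<lambda>x. f x + h x) - F f - L2_inner M G2 h\<bar> \<le> e * (t * n)"
      using d2(2) hL2 hsmall hn by auto
    have "L2_inner M G1 h - L2_inner M G2 h = (\<integral>x. inner (\<Delta> x) (h x) \<partial>M)"
      unfolding L2_inner_def \<Delta>_def
      using L2_inner_int[OF G1 hL2] L2_inner_int[OF G2 hL2]
      by (simp add: inner_diff_left)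
    also have "\<dots> = t * (\<integral>x. (norm (\<Delta> x))\<^sup>2 \<partial>M)"
      unfolding h_def by (simp add: power2_norm_eq_inner)
    also have "\<dots> = t * n\<^sup>2" unfolding n_def L2_norm_sq ..
    finally have eq: "L2_inner M G1 h - L2_inner M G2 h = t * n\<^sup>2" .
    have "t * n\<^sup>2 \<le> 2 * e * (t * n)" using b1 b2 eq by linarith
    hence "t * n * n \<le> t * n * (2 * e)" by (simp add: power2_eq_square algebra_simps)
    hence "n \<le> 2 * e" using tpos npos by (simp add: mult_le_cancel_left_pos)
    thus False using ne by simp
  qed
  have "n = 0"
  proof (rule ccontr)
    assume "n \<noteq> 0" hence "n > 0" using n0 by simp
    thus False using small[of "n / 4"] by simp
  qed
  hence "(\<integral>x. (norm (\<Delta> x))\<^sup>2 \<partial>M) = 0" using L2_norm_sq[of M \<Delta>] unfolding n_def by simp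
  hence "AE x in M. (norm (\<Delta> x))\<^sup>2 = 0"
    using integral_nonneg_eq_0_iff_AE[of M "\<lambda>x. (norm (\<Delta> x))\<^sup>2"] L2_int[OF DL2] by simp
  thus ?thesis unfolding \<Delta>_def by eventually_elim simp
qed

context lgs begin

lemma frechet:
  assumes f: "f \<in> L2 M"
  shows "has_L2_gradient M (int_functional M \<iota>) f (\<lambda>x. grad (\<iota> x) (f x))"
  unfolding has_L2_gradient_def
proof (intro conjI allI impI)
  show "(\<lambda>x. grad (\<iota> x) (f x)) \<in> L2 M" by (rule G_L2[OF f])
next
  fix e :: real assume e: "e > 0"
  define d where "d = e / (L + 1)"
  have dpos: "d > 0" unfolding d_def using e L_nonneg by simp
  have Ld: "L * d \<le> e" unfolding d_def using e L_nonneg by (simp add: field_simps)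
  show "\<exists>d>0. \<forall>h\<in>L2 M. L2_norm M h < d \<longrightarrow>
      \<bar>int_functional M \<iota> (\<lambda>x. f x + h x) - int_functional M \<iota> f - L2_inner M (\<lambda>x. grad (\<iota> x) (f x)) h\<bar>
        \<le> e * L2_norm M h"
  proof (intro exI[of _ d] conjI ballI impI dpos)
    fix h :: "'a \<Rightarrow> real^'l" assume hL2: "h \<in> L2 M" and hs: "L2_norm M h < d"
    have i1: "integrable M (\<lambda>x. \<iota> x (f x + h x))" using wd[OF L2_add[OF f hL2]] .
    have i0: "integrable M (\<lambda>x. \<iota> x (f x))" using wd[OF f] .
    have i2: "integrable M (\<lambda>x. inner (grad (\<iota> x) (f x)) (h x))" by (rule L2_inner_int[OF G_L2[OF f] hL2])
    define r where "r x = \<iota> x (f x + h x) - \<iota> x (f x) - inner (grad (\<iota> x) (f x)) (h x)" for x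
    have ir: "integrable M r" unfolding r_def using i1 i0 i2 by simp
    have eq: "int_functional M \<iota> (\<lambda>x. f x + h x) - int_functional M \<iota> f - L2_inner M (\<lambda>x. grad (\<iota> x) (f x)) h
        = (\<integral>x. r x \<partial>M)"
      unfolding int_functional_def L2_inner_def r_def using i1 i0 i2 by simp
    have ib: "integrable M (\<lambda>x. L * (norm (h x))\<^sup>2)" using L2_int[OF hL2] by simp
    have "\<bar>\<integral>x. r x \<partial>M\<bar> \<le> (\<integral>x. \<bar>r x\<bar> \<partial>M)" using integral_norm_bound[of M r] by simp
    also have "\<dots> \<le> (\<integral>x. L * (norm (h x))\<^sup>2 \<partial>M)"
    proof (rule integral_mono_AE)
      show "integrable M (\<lambda>x. \<bar>r x\<bar>)" using ir by simp
      show "integrable M (\<lambda>x. L * (norm (h x))\<^sup>2)" by (rule ib)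
      show "AE x in M. \<bar>r x\<bar> \<le> L * (norm (h x))\<^sup>2" using Nbound
        by eventually_elim (simp add: r_def)
    qed
    also have "\<dots> = L * (L2_norm M h)\<^sup>2" by (simp add: L2_norm_sq)
    also have "\<dots> \<le> e * L2_norm M h"
    proof -
      have "L * L2_norm M h \<le> e" using Ld hs L_nonneg
        by (meson less_imp_le mult_left_mono order_trans)
      thus ?thesis using L2_norm_nonneg[of M h]
        by (simp add: power2_eq_square mult.assoc[symmetric] mult_right_mono)
    qed
    finally show "\<bar>int_functional M \<iota> (\<lambda>x. f x + h x) - int_functional M \<iota> f - L2_inner M (\<lambda>x. grad (\<iota> x) (f x)) h\<bar>
        \<le> e * L2_norm M h" unfolding eq .
  qed
qed

end

context lgs begin

lemma part1: "\<forall>f\<in>L2 M. (\<exists>G. has_L2_gradient M (int_functional M \<iota>) f G) \<and>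
            (\<forall>G. has_L2_gradient M (int_functional M \<iota>) f G \<longrightarrow>
               (AE x in M. G x = grad (\<iota> x) (f x)))"
proof (intro ballI conjI allI impI)
  fix f :: "'a \<Rightarrow> real^'l" assume f: "f \<in> L2 M"
  show "\<exists>G. has_L2_gradient M (int_functional M \<iota>) f G" using frechet[OF f] by (rule exI[of _ "\<lambda>x. grad (\<iota> x) (f x)"])
  fix G assume "has_L2_gradient M (int_functional M \<iota>) f G"
  thus "AE x in M. G x = grad (\<iota> x) (f x)" by (rule grad_unique[OF prob _ frechet[OF f]])
qed

lemma part2: "L2_LG M L (int_functional M \<iota>)"
  unfolding L2_LG_def
proof (intro conjI ballI allI impI)
  fix f :: "'a \<Rightarrow> real^'l" assume f: "f \<in> L2 M"
  show "\<exists>G. has_L2_gradient M (int_functional M \<iota>) f G" using frechet[OF f] by (rule exI[of _ "\<lambda>x. grad (\<iota> x) (f x)"])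
next
  fix f g Gf Gg
  assume f: "f \<in> L2 M" and g: "g \<in> L2 M"
    and gf: "has_L2_gradient M (int_functional M \<iota>) f Gf"
    and gg: "has_L2_gradient M (int_functional M \<iota>) g Gg"
  have GfL2: "Gf \<in> L2 M" and GgL2: "Gg \<in> L2 M" using gf gg unfolding has_L2_gradient_def by auto
  have ef: "AE x in M. Gf x = grad (\<iota> x) (f x)" by (rule grad_unique[OF prob gf frechet[OF f]])
  have eg: "AE x in M. Gg x = grad (\<iota> x) (g x)" by (rule grad_unique[OF prob gg frechet[OF g]])
  have "(\<integral>x. (norm (Gf x - Gg x))\<^sup>2 \<partial>M) \<le> (\<integral>x. L\<^sup>2 * (norm (f x - g x))\<^sup>2 \<partial>M)"
  proof (rule integral_mono_AE)
    show "integrable M (\<lambda>x. (norm (Gf x - Gg x))\<^sup>2)" by (rule L2_int[OF L2_diff[OF GfL2 GgL2]])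
    show "integrable M (\<lambda>x. L\<^sup>2 * (norm (f x - g x))\<^sup>2)" using L2_int[OF L2_diff[OF f g]] by simp
    show "AE x in M. (norm (Gf x - Gg x))\<^sup>2 \<le> L\<^sup>2 * (norm (f x - g x))\<^sup>2"
      using ef eg Nlip
    proof eventually_elim
      case (elim x)
      hence "norm (Gf x - Gg x) \<le> L * norm (f x - g x)" by simp
      hence "(norm (Gf x - Gg x))\<^sup>2 \<le> (L * norm (f x - g x))\<^sup>2" by (simp add: power_mono)
      thus ?case by (simp add: power_mult_distrib)
    qed
  qed
  also have "\<dots> = L\<^sup>2 * (\<integral>x. (norm (f x - g x))\<^sup>2 \<partial>M)" by simp
  finally have le: "(\<integral>x. (norm (Gf x - Gg x))\<^sup>2 \<partial>M) \<le> L\<^sup>2 * (\<integral>x. (norm (f x - g x))\<^sup>2 \<partial>M)" .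
  have "L2_norm M (\<lambda>x. Gf x - Gg x) \<le> sqrt (L\<^sup>2 * (\<integral>x. (norm (f x - g x))\<^sup>2 \<partial>M))"
    unfolding L2_norm_def using le by (rule real_sqrt_le_mono)
  also have "\<dots> = L * L2_norm M (\<lambda>x. f x - g x)"
    unfolding L2_norm_def using L_nonneg by (simp add: real_sqrt_mult)
  finally show "L2_norm M (\<lambda>x. Gf x - Gg x) \<le> L * L2_norm M (\<lambda>x. f x - g x)" .
qed

lemma pl_key:
  assumes lam: "lam > 0" and PL: "AE x in M. PL_on UNIV lam (\<iota> x)"
    and f: "f \<in> L2 M" and g: "g \<in> L2 M"
  shows "lam * (int_functional M \<iota> f - int_functional M \<iota> g)
          \<le> 1/2 * (L2_norm M (\<lambda>x. grad (\<iota> x) (f x)))\<^sup>2"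
proof -
  have i1: "integrable M (\<lambda>x. \<iota> x (f x))" by (rule wd[OF f])
  have i2: "integrable M (\<lambda>x. \<iota> x (g x))" by (rule wd[OF g])
  have "(\<integral>x. lam * (\<iota> x (f x) - \<iota> x (g x)) \<partial>M) \<le> (\<integral>x. 1/2 * (norm (grad (\<iota> x) (f x)))\<^sup>2 \<partial>M)"
  proof (rule integral_mono_AE)
    show "integrable M (\<lambda>x. lam * (\<iota> x (f x) - \<iota> x (g x)))" using i1 i2 by simp
    show "integrable M (\<lambda>x. 1/2 * (norm (grad (\<iota> x) (f x)))\<^sup>2)" using L2_int[OF G_L2[OF f]] by simp
    show "AE x in M. lam * (\<iota> x (f x) - \<iota> x (g x)) \<le> 1/2 * (norm (grad (\<iota> x) (f x)))\<^sup>2"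
      using PL
    proof eventually_elim
      case (elim x)
      hence bdd: "bdd_below (range (\<iota> x))"
        and pl: "1/2 * (norm (grad (\<iota> x) (f x)))\<^sup>2 \<ge> lam * (\<iota> x (f x) - (INF w. \<iota> x w))"
        unfolding PL_on_def by auto
      have "(INF w. \<iota> x w) \<le> \<iota> x (g x)" by (rule cINF_lower[OF bdd UNIV_I])
      hence "lam * (\<iota> x (f x) - \<iota> x (g x)) \<le> lam * (\<iota> x (f x) - (INF w. \<iota> x w))"
        using lam by (intro mult_left_mono) auto
      thus ?case using pl by linarith
    qed
  qed
  moreover have "(\<integral>x. lam * (\<iota> x (f x) - \<iota> x (g x)) \<partial>M)
      = lam * (int_functional M \<iota> f - int_functional M \<iota> g)"
    unfolding int_functional_def using i1 i2 by simp
  moreover have "(\<integral>x. 1/2 * (norm (grad (\<iota> x) (f x)))\<^sup>2 \<partial>M) = 1/2 * (L2_norm M (\<lambda>x. grad (\<iota> x) (f x)))\<^sup>2"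
    by (simp add: L2_norm_sq)
  ultimately show ?thesis by linarith
qed

lemma part3: "\<forall>lam>0. (AE x in M. PL_on UNIV lam (\<iota> x)) \<longrightarrow> L2_PL M lam (int_functional M \<iota>)"
proof (intro allI impI)
  fix lam :: real assume lam: "lam > 0" and PL: "AE x in M. PL_on UNIV lam (\<iota> x)"
  let ?F = "int_functional M \<iota>"
  have lowb: "?F f - (1/2 * (L2_norm M (\<lambda>x. grad (\<iota> x) (f x)))\<^sup>2) / lam \<le> ?F g"
    if f: "f \<in> L2 M" and g: "g \<in> L2 M" for f g
  proof -
    have "lam * (?F f - ?F g) \<le> 1/2 * (L2_norm M (\<lambda>x. grad (\<iota> x) (f x)))\<^sup>2"
      by (rule pl_key[OF lam PL f g])
    thus ?thesis using lam by (simp add: field_simps)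
  qed
  show "L2_PL M lam ?F"
    unfolding L2_PL_def
  proof (intro conjI ballI allI impI lam)
    show "bdd_below (?F ` L2 M)"
    proof (rule bdd_belowI2[where m = "?F (\<lambda>x. 0) - (1/2 * (L2_norm M (\<lambda>x. grad (\<iota> x) 0))\<^sup>2) / lam"])
      fix g :: "'a \<Rightarrow> real^'l" assume "g \<in> L2 M"
      from lowb[OF zero_L2 this] show "?F (\<lambda>x. 0) - (1/2 * (L2_norm M (\<lambda>x. grad (\<iota> x) 0))\<^sup>2) / lam \<le> ?F g" by simp
    qed
  next
    fix f G assume f: "f \<in> L2 M" and gG: "has_L2_gradient M ?F f G"
    have GL2: "G \<in> L2 M" using gG unfolding has_L2_gradient_def by auto
    have e: "AE x in M. G x = grad (\<iota> x) (f x)" by (rule grad_unique[OF prob gG frechet[OF f]])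
    have "(\<integral>x. (norm (G x))\<^sup>2 \<partial>M) = (\<integral>x. (norm (grad (\<iota> x) (f x)))\<^sup>2 \<partial>M)"
    proof (rule integral_cong_AE)
      note [measurable] = L2_meas[OF GL2] grad_meas[OF f]
      show "(\<lambda>x. (norm (G x))\<^sup>2) \<in> borel_measurable M" by measurable
      show "(\<lambda>x. (norm (grad (\<iota> x) (f x)))\<^sup>2) \<in> borel_measurable M" by measurable
      show "AE x in M. (norm (G x))\<^sup>2 = (norm (grad (\<iota> x) (f x)))\<^sup>2" using e by eventually_elim simp
    qed
    hence nG: "L2_norm M G = L2_norm M (\<lambda>x. grad (\<iota> x) (f x))" unfolding L2_norm_def by simp
    define c where "c = (1/2 * (L2_norm M (\<lambda>x. grad (\<iota> x) (f x)))\<^sup>2) / lam"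
    have "?F f - c \<le> (INF g\<in>L2 M. ?F g)"
    proof (rule cINF_greatest)
      show "L2 M \<noteq> {}" using zero_L2 by blast
      fix g :: "'a \<Rightarrow> real^'l" assume "g \<in> L2 M"
      thus "?F f - c \<le> ?F g" unfolding c_def by (rule lowb[OF f])
    qed
    hence "lam * (?F f - (INF g\<in>L2 M. ?F g)) \<le> lam * c" using lam by (intro mult_left_mono) auto
    also have "lam * c = 1/2 * (L2_norm M G)\<^sup>2" unfolding c_def nG using lam by simp
    finally show "1/2 * (L2_norm M G)\<^sup>2 \<ge> lam * (?F f - (INF g\<in>L2 M. ?F g))" .
  qed
qed

end

theorem lemma4:
  fixes M :: "'a::polish_space measure"
    and \<iota> :: "'a \<Rightarrow> real^'l \<Rightarrow> real"
    and L :: real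
  assumes borel: "sets M = sets borel"
    and prob: "prob_space M"
    and L_nonneg: "L \<ge> 0"
    and meas: "\<And>z. (\<lambda>x. \<iota> x z) \<in> borel_measurable M"
    and diff: "\<And>x z. (\<iota> x) differentiable (at z)"
    and wd: "\<And>f. f \<in> L2 M \<Longrightarrow> integrable M (\<lambda>x. \<iota> x (f x))"
    and LG: "AE x in M. LG_on UNIV L (\<iota> x)"
  shows "(\<forall>f\<in>L2 M. (\<exists>G. has_L2_gradient M (int_functional M \<iota>) f G) \<and>
            (\<forall>G. has_L2_gradient M (int_functional M \<iota>) f G \<longrightarrow>
               (AE x in M. G x = grad (\<iota> x) (f x))))
         \<and> L2_LG M L (int_functional M \<iota>)
         \<and> (\<forall>lam>0. (AE x in M. PL_on UNIV lam (\<iota> x)) \<longrightarrow> L2_PL M lam (int_functional M \<iota>))"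
proof -
  interpret lgs M \<iota> L by (rule lgs.intro[OF prob L_nonneg diff wd LG])
  show ?thesis by (intro conjI part1 part2 part3)
qed

end
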